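(* Let $\circ$ be an alternative operation on $V=\mathbb{F}_2^s$ such that $\dim W_\circ=s-3$. Then $\dim U_\circ\in\{2,3\}$.
   Context: An alternative operation on $V$ is defined from an elementary abelian $2$-subgroup $T<\mathrm{AGL}(V,+)$ acting regularly on $V$: with $\tau_a$ the unique element of $T$ sending $0$ to $a$ (postfix notation), $a\circ b:=a\tau_b$. It is assumed that the xor-translations $x\mapsto x+a$ lie in the normaliser of $T$ in $\mathrm{Sym}(V)$. The weak key space is $W_\circ=\{k: x\circ k=x+k\ \forall x\in V\}$; the product is $a\cdot b:=a+b+a\circ b$ and the error space is $U_\circ=\{a\cdot b: a,b\in V\}$. *)

theory Defs
  imports "HOL-Analysis.Analysis" "HOL-Library.Z2"
begin

text \<open>V = F_2^s is modelled as the type bit ^ 'n with s = CARD('n).\<close>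


definition affine_group :: "((bit ^ 'n::finite) \<Rightarrow> (bit ^ 'n)) set" where
  "affine_group = {t. \<exists>M :: bit ^ 'n ^ 'n. \<exists>c. invertible M \<and> t = (\<lambda>x. M *v x + c)}"

text \<open>The xor-translation by a.\<close>
definition xtrans :: "bit ^ 'n::finite \<Rightarrow> (bit ^ 'n \<Rightarrow> bit ^ 'n)" where
  "xtrans a = (\<lambda>x. x + a)"

text \<open>T is an elementary abelian 2-subgroup of AGL(V,+), acting regularly on V,
  and normalised by all xor-translations.\<close>
definition alt_group :: "((bit ^ 'n::finite) \<Rightarrow> (bit ^ 'n)) set \<Rightarrow> bool" where
  "alt_group T \<longleftrightarrow>
     T \<subseteq> affine_group \<and>
     id \<in> T \<and>
     (\<forall>t\<in>T. \<forall>u\<in>T. t \<circ> u \<in> T) \<and>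
     (\<forall>t\<in>T. inv t \<in> T) \<and>
     (\<forall>t\<in>T. \<forall>u\<in>T. t \<circ> u = u \<circ> t) \<and>
     (\<forall>t\<in>T. t \<circ> t = id) \<and>
     (\<forall>x y. \<exists>!t. t \<in> T \<and> t x = y) \<and>
     (\<forall>a. (\<lambda>t. xtrans a \<circ> t \<circ> inv (xtrans a)) ` T = T)"

text \<open>tau_a: the unique element of T sending 0 to a.\<close>
definition tau :: "((bit ^ 'n::finite) \<Rightarrow> (bit ^ 'n)) set \<Rightarrow> bit ^ 'n \<Rightarrow> (bit ^ 'n \<Rightarrow> bit ^ 'n)" where
  "tau T a = (THE t. t \<in> T \<and> t 0 = a)"

text \<open>a \<circ> b := a tau_b (postfix notation: tau_b applied to a).\<close>
definition circ :: "((bit ^ 'n::finite) \<Rightarrow> (bit ^ 'n)) set \<Rightarrow> bit ^ 'n \<Rightarrow> bit ^ 'n \<Rightarrow> bit ^ 'n" where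
  "circ T a b = tau T b a"

definition weak_keys :: "((bit ^ 'n::finite) \<Rightarrow> (bit ^ 'n)) set \<Rightarrow> (bit ^ 'n) set" where
  "weak_keys T = {k. \<forall>x. circ T x k = x + k}"

definition dotp :: "((bit ^ 'n::finite) \<Rightarrow> (bit ^ 'n)) set \<Rightarrow> bit ^ 'n \<Rightarrow> bit ^ 'n \<Rightarrow> bit ^ 'n" where
  "dotp T a b = a + b + circ T a b"

definition error_space :: "((bit ^ 'n::finite) \<Rightarrow> (bit ^ 'n)) set \<Rightarrow> (bit ^ 'n) set" where
  "error_space T = {dotp T a b | a b. True}"

end

theory Submission
  imports Defs
begin

lemma bit_add_self[simp]: "(a::bit) + a = 0"
  by (cases a) (simp_all flip: one_add_one)

lemma vec_add_self[simp]: "(x::bit^'n) + x = 0"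
  by (simp add: vec_eq_iff)

lemma vec_add_cancel: "(x::bit^'n) + y = 0 \<longleftrightarrow> x = y"
  by (metis add.assoc add_0 vec_add_self)

lemma cancel3: "(v::bit^'n) = e + a + b \<Longrightarrow> e = v + a + b"
proof -
  assume "v = e + a + b"
  then have "v + a + b = e + (a + a) + (b + b)" by (simp only: add_ac)
  then show ?thesis by simp
qed

lemma lin_span:
  fixes \<beta> :: "bit^'n \<Rightarrow> bit^'n \<Rightarrow> bit^'n"
  assumes add: "\<And>x y z. \<beta> (x+y) z = \<beta> x z + \<beta> y z"
    and scl: "\<And>c x z. \<beta> (c *s x) z = c *s \<beta> x z"
    and x: "x \<in> vec.span S" and Z: "vec.subspace Z"
    and S: "\<And>s. s \<in> S \<Longrightarrow> \<beta> s y \<in> Z"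
  shows "\<beta> x y \<in> Z"
proof -
  have "vec.subspace {x. \<beta> x y \<in> Z}"
    unfolding vec.subspace_def
  proof (intro conjI ballI allI)
    have "\<beta> 0 y = \<beta> (0 *s 0) y" by simp
    also have "\<dots> = 0" by (simp only: scl) simp
    finally show "0 \<in> {x. \<beta> x y \<in> Z}" using Z by (simp add: vec.subspace_0)
  next
    fix a b assume "a \<in> {x. \<beta> x y \<in> Z}" "b \<in> {x. \<beta> x y \<in> Z}"
    then show "a + b \<in> {x. \<beta> x y \<in> Z}" using Z by (simp add: add vec.subspace_add)
  next
    fix c a assume "a \<in> {x. \<beta> x y \<in> Z}"
    then show "c *s a \<in> {x. \<beta> x y \<in> Z}" using Z by (simp add: scl vec.subspace_scale)
  qed
  then show ?thesis
    using vec.span_induct[OF x, of "\<lambda>x. \<beta> x y \<in> Z"] S by auto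
qed

lemma abstract_main:
  fixes \<beta> :: "bit^'n \<Rightarrow> bit^'n \<Rightarrow> bit^'n"
  assumes add: "\<And>x y z. \<beta> (x+y) z = \<beta> x z + \<beta> y z"
    and scl: "\<And>c x z. \<beta> (c *s x) z = c *s \<beta> x z"
    and sym: "\<And>x y. \<beta> x y = \<beta> y x"
    and alt: "\<And>x. \<beta> x x = 0"
    and dW: "vec.dim {k. \<forall>x. \<beta> x k = 0} + 3 = CARD('n)"
  shows "vec.dim {\<beta> a b | a b. True} \<in> {2,3}"
proof -
  define W where "W = {k. \<forall>x. \<beta> x k = 0}"
  define U where "U = {\<beta> a b | a b. True}"
  have add2: "\<beta> z (x+y) = \<beta> z x + \<beta> z y" for x y z
    using add[of x y z] sym[of z "x+y"] sym[of z x] sym[of z y] by simp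
  have scl2: "\<beta> z (c *s x) = c *s \<beta> z x" for c x z
    using scl[of c x z] sym[of z "c *s x"] sym[of z x] by simp
  obtain BW where BW: "BW \<subseteq> W" "vec.independent BW" "W \<subseteq> vec.span BW" "card BW = vec.dim W"
    by (rule vec.basis_exists[of W])
  obtain B where B: "BW \<subseteq> B" "vec.independent B" "UNIV \<subseteq> vec.span B"
  proof (rule vec.maximal_independent_subset_extend[of BW UNIV])
    show "BW \<subseteq> UNIV" "vec.independent BW" using BW(2) by auto
  qed auto
  have finB: "finite B" using B(2) vec.finiteI_independent by blast
  have "vec.dim B = card B" using B(2) vec.dim_eq_card_independent by blast
  moreover have "vec.dim B = vec.dim (UNIV :: (bit^'n) set)"
  proof -
    have "vec.span B = UNIV" using B(3) by blast
    then show ?thesis using vec.dim_span[of B] by simp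
  qed
  ultimately have cB: "card B = CARD('n)" by (simp add: card_cart_basis)
  have "card (B - BW) = 3" using cB BW(4) dW B(1) finB unfolding W_def
    by (simp add: card_Diff_subset finite_subset)
  then obtain e1 e2 e3 where E: "B - BW = {e1,e2,e3}" "e1 \<noteq> e2" "e2 \<noteq> e3" "e1 \<noteq> e3"
    unfolding card_3_iff by blast
  have Bsplit: "B = BW \<union> {e1,e2,e3}" using E(1) B(1) by blast
  have eW: "e1 \<notin> BW" "e2 \<notin> BW" "e3 \<notin> BW" using E(1) by auto
  have BWz: "\<And>s y. s \<in> BW \<Longrightarrow> \<beta> y s = 0" using BW(1) unfolding W_def by auto
  have eB: "e1 \<in> B" "e2 \<in> B" "e3 \<in> B" using Bsplit by auto
  have allspan: "\<And>x. x \<in> vec.span B" using B(3) by blast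
  have indep_contra: "\<And>e. e \<in> B \<Longrightarrow> e \<in> vec.span (B - {e}) \<Longrightarrow> False"
    using B(2) vec.dependent_def by blast
  \<comment> \<open>upper bound\<close>
  define E3 where "E3 = {\<beta> e1 e2, \<beta> e1 e3, \<beta> e2 e3}"
  have inner: "\<beta> t s \<in> vec.span E3" if "s \<in> B" "t \<in> B" for s t
  proof -
    have s: "s \<in> BW \<or> s \<in> {e1,e2,e3}" "t \<in> BW \<or> t \<in> {e1,e2,e3}"
      using that Bsplit by auto
    show ?thesis
    proof (cases "s \<in> BW")
      case True then show ?thesis using BWz vec.span_zero by metis
    next
      case sF: False
      show ?thesis
      proof (cases "t \<in> BW")
        case True then show ?thesis using BWz[of t s] sym[of t s] vec.span_zero by metis
      next
        case False
        then have "\<beta> t s \<in> insert 0 E3" using s sF unfolding E3_def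
          by (auto simp: alt sym[of e2 e1] sym[of e3 e1] sym[of e3 e2])
        then show ?thesis
        proof (rule insertE)
          assume "\<beta> t s = 0" then show ?thesis by (simp add: vec.span_zero)
        next
          assume "\<beta> t s \<in> E3" then show ?thesis by (rule vec.span_base)
        qed
      qed
    qed
  qed
  have "U \<subseteq> vec.span E3"
  proof
    fix z assume "z \<in> U"
    then obtain a b where z: "z = \<beta> a b" unfolding U_def by blast
    have "\<beta> a b \<in> vec.span E3"
    proof (rule lin_span[of \<beta>, OF add scl allspan vec.subspace_span])
      fix s assume s: "s \<in> B"
      have "\<beta> b s \<in> vec.span E3"
        by (rule lin_span[of \<beta>, OF add scl allspan vec.subspace_span]) (rule inner[OF s])
      then show "\<beta> s b \<in> vec.span E3" by (simp add: sym)
    qed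
    then show "z \<in> vec.span E3" using z by simp
  qed
  then have "vec.dim U \<le> card E3" using vec.dim_le_card[of U E3] unfolding E3_def by simp
  also have "card E3 \<le> 3" unfolding E3_def by (simp add: card_insert_if)
  finally have up: "vec.dim U \<le> 3" .
  \<comment> \<open>lower bound\<close>
  have low: "\<not> vec.dim U \<le> 1"
  proof
    assume d1: "vec.dim U \<le> 1"
    obtain BU where BU: "BU \<subseteq> U" "vec.independent BU" "U \<subseteq> vec.span BU" "card BU = vec.dim U"
      by (rule vec.basis_exists[of U])
    have "finite BU" using BU(2) vec.finiteI_independent by blast
    have "\<exists>u. BU \<subseteq> {u}"
    proof (cases "BU = {}")
      case True then show ?thesis by blast
    next
      case False
      then obtain u where u: "u \<in> BU" by blast
      have "\<forall>x\<in>BU. \<forall>y\<in>BU. x = y" using d1 BU(4) card_le_Suc0_iff_eq[OF \<open>finite BU\<close>] by simp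
      then show ?thesis using u by blast
    qed
    then obtain u where "BU \<subseteq> {u}" by blast
    then have Uu: "U \<subseteq> range (\<lambda>k. k *s u)"
      using BU(3) vec.span_mono[of BU "{u}"] vec.span_singleton[of u] by blast
    have "\<beta> e1 e2 \<in> U" "\<beta> e1 e3 \<in> U" "\<beta> e2 e3 \<in> U" unfolding U_def by auto
    then obtain l12 l13 l23 where L: "\<beta> e1 e2 = l12 *s u" "\<beta> e1 e3 = l13 *s u" "\<beta> e2 e3 = l23 *s u"
      using Uu by blast
    define v where "v = l23 *s e1 + l13 *s e2 + l12 *s e3"
    have vz: "\<beta> v s = 0" if "s \<in> B" for s
    proof -
      have "s \<in> BW \<or> s = e1 \<or> s = e2 \<or> s = e3" using that Bsplit by auto
      then show ?thesis
      proof (elim disjE)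
        assume "s \<in> BW" then show ?thesis using BWz by blast
      next
        assume "s = e1" then show ?thesis unfolding v_def
          by (simp add: add scl alt sym[of e2 e1] sym[of e3 e1] L mult.commute)
      next
        assume "s = e2" then show ?thesis unfolding v_def
          by (simp add: add scl alt sym[of e2 e1] sym[of e3 e2] L mult.commute)
      next
        assume "s = e3" then show ?thesis unfolding v_def
          by (simp add: add scl alt sym[of e3 e1] sym[of e3 e2] L mult.commute)
      qed
    qed
    have "v \<in> W" unfolding W_def
    proof (intro CollectI allI)
      fix x
      have "\<beta> x v \<in> {0}"
        by (rule lin_span[of \<beta>, OF add scl allspan vec.subspace_single_0]) (simp add: sym[of _ v] vz)
      then show "\<beta> x v = 0" by simp
    qed
    then have vBW: "v \<in> vec.span BW" using BW(3) by blast
    have spBW: "v \<in> vec.span (B - {e})" if "e \<in> {e1,e2,e3}" for e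
    proof -
      have "BW \<subseteq> B - {e}" using eW B(1) that by auto
      then have "vec.span BW \<subseteq> vec.span (B - {e})" by (rule vec.span_mono)
      then show ?thesis using vBW by blast
    qed
    have l230: "l23 = 0"
    proof (rule ccontr)
      assume "l23 \<noteq> 0" then have "l23 = 1" by simp
      then have "v = e1 + l13 *s e2 + l12 *s e3" by (simp add: v_def add_ac)
      then have eq: "e1 = v + l13 *s e2 + l12 *s e3" by (rule cancel3)
      have "e2 \<in> B - {e1}" "e3 \<in> B - {e1}" using E Bsplit by auto
      then have mem: "v + l13 *s e2 + l12 *s e3 \<in> vec.span (B - {e1})"
        by (intro vec.span_add vec.span_scale vec.span_base spBW) auto
      have "e1 \<in> vec.span (B - {e1})" using mem unfolding eq[symmetric] .
      then show False using indep_contra[of e1] eB by blast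
    qed
    have l130: "l13 = 0"
    proof (rule ccontr)
      assume "l13 \<noteq> 0" then have "l13 = 1" by simp
      then have "v = e2 + l23 *s e1 + l12 *s e3" by (simp add: v_def add_ac)
      then have eq: "e2 = v + l23 *s e1 + l12 *s e3" by (rule cancel3)
      have "e1 \<in> B - {e2}" "e3 \<in> B - {e2}" using E Bsplit by auto
      then have mem: "v + l23 *s e1 + l12 *s e3 \<in> vec.span (B - {e2})"
        by (intro vec.span_add vec.span_scale vec.span_base spBW) auto
      have "e2 \<in> vec.span (B - {e2})" using mem unfolding eq[symmetric] .
      then show False using indep_contra[of e2] eB by blast
    qed
    have l120: "l12 = 0"
    proof (rule ccontr)
      assume "l12 \<noteq> 0" then have "l12 = 1" by simp
      then have "v = e3 + l23 *s e1 + l13 *s e2" by (simp add: v_def add_ac)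
      then have eq: "e3 = v + l23 *s e1 + l13 *s e2" by (rule cancel3)
      have "e1 \<in> B - {e3}" "e2 \<in> B - {e3}" using E Bsplit by auto
      then have mem: "v + l23 *s e1 + l13 *s e2 \<in> vec.span (B - {e3})"
        by (intro vec.span_add vec.span_scale vec.span_base spBW) auto
      have "e3 \<in> vec.span (B - {e3})" using mem unfolding eq[symmetric] .
      then show False using indep_contra[of e3] eB by blast
    qed
    have L0: "\<beta> e1 e2 = 0" "\<beta> e1 e3 = 0" "\<beta> e2 e3 = 0" using L l230 l130 l120 by simp_all
    have "e1 \<in> W" unfolding W_def
    proof (intro CollectI allI)
      fix x
      have "\<beta> x e1 \<in> {0}"
      proof (rule lin_span[of \<beta>, OF add scl allspan vec.subspace_single_0])
        fix s assume "s \<in> B"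
        then have "s \<in> BW \<or> s = e1 \<or> s = e2 \<or> s = e3" using Bsplit by auto
        then show "\<beta> s e1 \<in> {0}"
        proof (elim disjE)
          assume "s \<in> BW" then show ?thesis using BWz[of s e1] sym[of s e1] by simp
        next
          assume "s = e1" then show ?thesis by (simp add: alt)
        next
          assume "s = e2" then show ?thesis using L0 sym[of e2 e1] by simp
        next
          assume "s = e3" then show ?thesis using L0 sym[of e3 e1] by simp
        qed
      qed
      then show "\<beta> x e1 = 0" by simp
    qed
    then have "e1 \<in> vec.span (B - {e1})"
    proof -
      have "BW \<subseteq> B - {e1}" using B(1) eW by blast
      then have "vec.span BW \<subseteq> vec.span (B - {e1})" by (rule vec.span_mono)
      then show ?thesis using BW(3) \<open>e1 \<in> W\<close> by blast
    qed
    then show False using indep_contra[of e1] Bsplit by auto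
  qed
  show ?thesis using up low unfolding U_def W_def by auto
qed

lemma alt_groupD:
  assumes "alt_group T"
  shows "T \<subseteq> affine_group" "\<And>t u. t \<in> T \<Longrightarrow> u \<in> T \<Longrightarrow> t \<circ> u = u \<circ> t"
    "\<And>t. t \<in> T \<Longrightarrow> t \<circ> t = id" "\<And>x y. \<exists>!t. t \<in> T \<and> t x = y"
  using assms unfolding alt_group_def by simp_all

lemma tau_props:
  assumes "alt_group T"
  shows "tau T b \<in> T \<and> tau T b 0 = b"
proof -
  have "\<exists>!t. t \<in> T \<and> t 0 = b" by (rule alt_groupD(4)[OF assms])
  then show ?thesis unfolding tau_def by (rule theI')
qed

lemma dotp_lin:
  assumes "alt_group T"
  shows "\<exists>M. \<forall>a. dotp T a b = a + M *v a"
proof -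
  have "tau T b \<in> affine_group" using tau_props[OF assms] alt_groupD(1)[OF assms] by blast
  then obtain M c where Mc: "tau T b = (\<lambda>x. M *v x + c)" unfolding affine_group_def by blast
  have "c = b" using tau_props[OF assms, of b] Mc by simp
  then have "\<forall>a. dotp T a b = a + M *v a" unfolding dotp_def circ_def Mc
    by (simp add: add.assoc add.left_commute)
  then show ?thesis by blast
qed

theorem proposition5:
  fixes T :: "((bit ^ 'n::finite) \<Rightarrow> (bit ^ 'n)) set"
  assumes "alt_group T"
    and "int (vec.dim (weak_keys T)) = int CARD('n) - 3"
  shows "vec.dim (error_space T) \<in> {2, 3}"
proof -
  let ?\<beta> = "dotp T"
  have add: "?\<beta> (x+y) z = ?\<beta> x z + ?\<beta> y z" for x y z
  proof -
    obtain M where M: "\<forall>a. dotp T a z = a + M *v a" using dotp_lin[OF assms(1)] by blast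
    show ?thesis unfolding M[rule_format] by (simp add: matrix_vector_right_distrib add_ac)
  qed
  have scl: "?\<beta> (c *s x) z = c *s ?\<beta> x z" for c x z
  proof -
    obtain M where M: "\<forall>a. dotp T a z = a + M *v a" using dotp_lin[OF assms(1)] by blast
    show ?thesis unfolding M[rule_format] by (simp add: vec.scale vector_add_ldistrib)
  qed
  have comm: "\<And>t u. t \<in> T \<Longrightarrow> u \<in> T \<Longrightarrow> t \<circ> u = u \<circ> t"
    and inv: "\<And>t. t \<in> T \<Longrightarrow> t \<circ> t = id"
    using alt_groupD[OF assms(1)] by blast+
  have sym: "?\<beta> x y = ?\<beta> y x" for x y
  proof -
    have "tau T y \<circ> tau T x = tau T x \<circ> tau T y"
      using comm[of "tau T y" "tau T x"] tau_props[OF assms(1)] by blast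
    then have "(tau T y \<circ> tau T x) 0 = (tau T x \<circ> tau T y) 0" by simp
    then have "circ T x y = circ T y x" unfolding circ_def using tau_props[OF assms(1)] by simp
    then show ?thesis unfolding dotp_def by (simp add: add_ac)
  qed
  have alt: "?\<beta> x x = 0" for x
  proof -
    have "tau T x \<circ> tau T x = id" using inv tau_props[OF assms(1)] by blast
    then have "(tau T x \<circ> tau T x) 0 = 0" by simp
    then have "circ T x x = 0" unfolding circ_def using tau_props[OF assms(1)] by simp
    then show ?thesis unfolding dotp_def by simp
  qed
  have W: "weak_keys T = {k. \<forall>x. ?\<beta> x k = 0}"
  proof -
    have e: "(x + k + circ T x k = 0) = (circ T x k = x + k)" for x k
      using vec_add_cancel[of "x + k" "circ T x k"] by auto
    show ?thesis unfolding weak_keys_def dotp_def e ..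
  qed
  have dW: "vec.dim {k. \<forall>x. ?\<beta> x k = 0} + 3 = CARD('n)" using assms(2) unfolding W by linarith
  show ?thesis unfolding error_space_def
    by (rule abstract_main[of ?\<beta>, OF add scl sym alt dW])
qed

end
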